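(* Let $\mathcal{L}$ be a (one-sorted) relational language and $\mathcal{M}$ an $\mathcal{L}$-structure. If $\mathcal{M}$ has an $\equiv^{\mathcal{M}}$-equivalence class of size $\kappa$, then $\mathrm{Aut}(\mathcal{M})$ has a subgroup isomorphic to $\mathrm{Perm}(\kappa)$, the group of all permutations of $\kappa$.
   Context: Let $\Phi$ be the collection of atomic formulas of the form $R(z_1,\dots,z_k)$ with $R$ a relation symbol of $\mathcal{L}$ and each $z_j$ a variable. For $a,b\in\mathcal{M}$, $\mathcal{M}\models a\equiv b$ means: for every $\psi(x,\mathbf{y})\in\Phi$ ($x$ a single variable) and every tuple $\mathbf{c}$ in $\mathcal{M}$, $\mathcal{M}\models\psi(a,\mathbf{c})\leftrightarrow\psi(b,\mathbf{c})$; this defines an equivalence relation $\equiv^{\mathcal{M}}$. *)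

theory Defs
  imports "HOL-Algebra.Algebra" "HOL-Library.Equipollence"
begin

(* A one-sorted relational language: relation symbols of type 'r with arities ar.
   An L-structure with universe the type 'a: interpretation I R (a list of length ar R). *)

(* Instantiate an atomic formula R(z_1..z_k): positions None are the variable x,
   positions Some c are the remaining variables y, assigned to c. *)
definition subst_hole :: "'a \<Rightarrow> 'a option list \<Rightarrow> 'a list" where
  "subst_hole a t = map (\<lambda>p. case p of None \<Rightarrow> a | Some c \<Rightarrow> c) t"

definition indisc :: "('r \<Rightarrow> nat) \<Rightarrow> ('r \<Rightarrow> 'a list \<Rightarrow> bool) \<Rightarrow> 'a \<Rightarrow> 'a \<Rightarrow> bool" where
  "indisc ar I a b \<longleftrightarrow>
     (\<forall>R t. length t = ar R \<longrightarrow> (I R (subst_hole a t) \<longleftrightarrow> I R (subst_hole b t)))"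

definition is_aut :: "('r \<Rightarrow> nat) \<Rightarrow> ('r \<Rightarrow> 'a list \<Rightarrow> bool) \<Rightarrow> ('a \<Rightarrow> 'a) \<Rightarrow> bool" where
  "is_aut ar I f \<longleftrightarrow> bij f \<and>
     (\<forall>R xs. length xs = ar R \<longrightarrow> (I R (map f xs) \<longleftrightarrow> I R xs))"

definition Aut :: "('r \<Rightarrow> nat) \<Rightarrow> ('r \<Rightarrow> 'a list \<Rightarrow> bool) \<Rightarrow> ('a \<Rightarrow> 'a) monoid" where
  "Aut ar I = (BijGroup (UNIV :: 'a set))\<lparr>carrier := {f \<in> Bij UNIV. is_aut ar I f}\<rparr>"

end

theory Submission
  imports Defs
begin

lemma indisc_refl: "indisc ar I x x"
  by (simp add: indisc_def)

lemma indisc_sym: "indisc ar I x y \<Longrightarrow> indisc ar I y x"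
  by (simp add: indisc_def)

lemma indisc_trans: "indisc ar I x y \<Longrightarrow> indisc ar I y z \<Longrightarrow> indisc ar I x z"
  by (simp add: indisc_def)

lemma indisc_swap1:
  assumes "indisc ar I x y" "length (p @ x # s) = ar R"
  shows "I R (p @ x # s) \<longleftrightarrow> I R (p @ y # s)"
proof -
  let ?t = "map Some p @ None # map Some s"
  have l: "length ?t = ar R" using assms(2) by simp
  have e: "\<And>z. subst_hole z ?t = p @ z # s"
    by (simp add: subst_hole_def comp_def)
  show ?thesis using assms(1) l unfolding indisc_def by (metis e)
qed

lemma indisc_lists:
  assumes "list_all2 (indisc ar I) xs ys"
  shows "length (p @ xs) = ar R \<Longrightarrow> I R (p @ xs) \<longleftrightarrow> I R (p @ ys)"
  using assms
proof (induction xs ys arbitrary: p rule: list_all2_induct)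
  case Nil
  then show ?case by simp
next
  case (Cons x xs y ys)
  have "I R (p @ x # xs) \<longleftrightarrow> I R (p @ y # xs)"
    using indisc_swap1 Cons by metis
  also have "\<dots> \<longleftrightarrow> I R ((p @ [y]) @ ys)"
    using Cons.IH[of "p @ [y]"] Cons.prems by simp
  finally show ?case by simp
qed

lemma aut_of_indisc:
  assumes "bij h" "\<And>x. indisc ar I x (h x)"
  shows "is_aut ar I h"
  unfolding is_aut_def
proof (intro conjI allI impI)
  fix R and xs :: "'a list" assume "length xs = ar R"
  moreover have "list_all2 (indisc ar I) xs (map h xs)"
    by (simp add: list_all2_conv_all_nth assms(2))
  ultimately show "I R (map h xs) = I R xs"
    using indisc_lists[of ar I xs "map h xs" "[]" R] by simp
qed (rule assms(1))

lemma Bij_UNIV: "Bij UNIV = {f. bij f}"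
  by (auto simp: Bij_def)

lemma subgroup_auts: "subgroup {f \<in> Bij UNIV. is_aut ar I f} (BijGroup UNIV)"
proof (rule group.subgroupI[OF group_BijGroup])
  show "{f \<in> Bij UNIV. is_aut ar I f} \<subseteq> carrier (BijGroup UNIV)"
    by (auto simp: BijGroup_def)
  show "{f \<in> Bij UNIV. is_aut ar I f} \<noteq> {}"
  proof -
    have "is_aut ar I id" by (rule aut_of_indisc) (auto simp: indisc_refl)
    thus ?thesis by (auto simp: Bij_UNIV intro!: exI[of _ id])
  qed
next
  fix f assume f: "f \<in> {f \<in> Bij UNIV. is_aut ar I f}"
  hence b: "bij f" and a: "is_aut ar I f" by (auto simp: Bij_UNIV)
  have "m_inv (BijGroup UNIV) f = inv_into UNIV f"
    using f by (simp add: inv_BijGroup restrict_UNIV)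
  moreover have "bij (inv_into UNIV f)" using b by (simp add: bij_imp_bij_inv)
  moreover have "is_aut ar I (inv_into UNIV f)"
    unfolding is_aut_def
  proof (intro conjI allI impI)
    fix R and xs :: "'a list" assume "length xs = ar R"
    hence "I R (map f (map (inv_into UNIV f) xs)) = I R (map (inv_into UNIV f) xs)"
      using a unfolding is_aut_def by (metis length_map)
    moreover have "map f (map (inv_into UNIV f) xs) = xs"
      using b by (simp add: comp_def bij_is_surj surj_f_inv_f)
    ultimately show "I R (map (inv_into UNIV f) xs) = I R xs" by simp
  qed (rule \<open>bij (inv_into UNIV f)\<close>)
  ultimately show "m_inv (BijGroup UNIV) f \<in> {f \<in> Bij UNIV. is_aut ar I f}"
    by (simp add: Bij_UNIV)
next
  fix f g assume f: "f \<in> {f \<in> Bij UNIV. is_aut ar I f}" and g: "g \<in> {f \<in> Bij UNIV. is_aut ar I f}"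
  hence "f \<otimes>\<^bsub>BijGroup UNIV\<^esub> g = f \<circ> g"
    by (simp add: restrict_UNIV comp_def BijGroup_def compose_def)
  moreover have "bij (f \<circ> g)" using f g by (auto simp: Bij_UNIV intro: bij_comp)
  moreover have "is_aut ar I (f \<circ> g)"
    using f g unfolding is_aut_def by (auto simp: Bij_UNIV bij_comp simp flip: map_map)
  ultimately show "f \<otimes>\<^bsub>BijGroup UNIV\<^esub> g \<in> {f \<in> Bij UNIV. is_aut ar I f}"
    by (simp add: Bij_UNIV)
qed

theorem corollary5p3:
  fixes ar :: "'r \<Rightarrow> nat" and I :: "'r \<Rightarrow> 'a list \<Rightarrow> bool" and a :: 'a
    and K :: "'k set"
  assumes "{b. indisc ar I a b} \<approx> K"
  shows "\<exists>H. subgroup H (Aut ar I) \<and> (Aut ar I)\<lparr>carrier := H\<rparr> \<cong> BijGroup K"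
proof -
  define C where "C = {b. indisc ar I a b}"
  obtain f where f: "bij_betw f C K" using assms unfolding C_def eqpoll_def by blast
  define g where "g = inv_into C f"
  have g: "bij_betw g K C" unfolding g_def using f by (rule bij_betw_inv_into)
  have gf: "\<And>x. x \<in> C \<Longrightarrow> g (f x) = x" unfolding g_def using f
    by (simp add: bij_betw_inv_into_left)
  have fg: "\<And>x. x \<in> K \<Longrightarrow> f (g x) = x" unfolding g_def using f
    by (simp add: bij_betw_inv_into_right)
  have fC: "\<And>x. x \<in> C \<Longrightarrow> f x \<in> K" using f bij_betwE by blast
  have gK: "\<And>x. x \<in> K \<Longrightarrow> g x \<in> C" using g bij_betwE by blast
  define H where "H = {h. bij h \<and> (\<forall>x. x \<notin> C \<longrightarrow> h x = x)}"
  have hC: "h ` C = C" if "h \<in> H" for h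
  proof -
    have b: "bij h" and o: "\<And>x. x \<notin> C \<Longrightarrow> h x = x" using that by (auto simp: H_def)
    have "h ` (-C) = -C" using o by (auto simp: image_iff)
    hence "h ` C = - (h ` (-C))" using b
      by (metis bij_image_Compl_eq double_compl)
    thus ?thesis using \<open>h ` (-C) = -C\<close> by simp
  qed
  have hbC: "bij_betw h C C" if "h \<in> H" for h
    using hC[OF that] that bij_betw_subset[of h UNIV UNIV C C] by (simp add: H_def)
  have hin: "\<And>h x. h \<in> H \<Longrightarrow> x \<in> C \<Longrightarrow> h x \<in> C" using hC by blast
  have H_aut: "H \<subseteq> {f \<in> Bij UNIV. is_aut ar I f}"
  proof
    fix h assume h: "h \<in> H"
    have "indisc ar I x (h x)" for x
    proof (cases "x \<in> C")
      case True
      then show ?thesis using hin[OF h True] unfolding C_def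
        by (auto intro: indisc_trans indisc_sym)
    next
      case False
      then show ?thesis using h by (simp add: H_def indisc_refl)
    qed
    thus "h \<in> {f \<in> Bij UNIV. is_aut ar I f}" using h aut_of_indisc[of h ar I]
      by (auto simp: H_def Bij_UNIV)
  qed
  have subH: "subgroup H (BijGroup UNIV)"
  proof (rule group.subgroupI[OF group_BijGroup])
    show "H \<subseteq> carrier (BijGroup UNIV)" by (auto simp: BijGroup_def H_def Bij_UNIV)
    show "H \<noteq> {}" by (auto simp: H_def intro!: exI[of _ id])
  next
    fix h assume h: "h \<in> H"
    hence b: "bij h" by (simp add: H_def)
    have "m_inv (BijGroup UNIV) h = inv_into UNIV h"
      using b by (simp add: inv_BijGroup Bij_UNIV restrict_UNIV)
    moreover have "inv_into UNIV h x = x" if "x \<notin> C" for x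
    proof -
      have "h x = x" using h that by (simp add: H_def)
      have "inv_into UNIV h (h x) = x" using b by (simp add: bij_is_inj)
      thus ?thesis using \<open>h x = x\<close> by metis
    qed
    ultimately show "m_inv (BijGroup UNIV) h \<in> H"
      using b by (simp add: H_def bij_imp_bij_inv)
  next
    fix h k assume h: "h \<in> H" and k: "k \<in> H"
    hence "h \<otimes>\<^bsub>BijGroup UNIV\<^esub> k = h \<circ> k"
      by (simp add: restrict_UNIV comp_def BijGroup_def compose_def H_def Bij_UNIV)
    thus "h \<otimes>\<^bsub>BijGroup UNIV\<^esub> k \<in> H" using h k
      by (auto simp: H_def intro: bij_comp)
  qed
  have sub: "subgroup H (Aut ar I)"
    unfolding Aut_def
    by (rule group.subgroup_incl[OF group_BijGroup subH subgroup_auts H_aut])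
  define \<phi> where "\<phi> h = (\<lambda>x\<in>K. f (h (g x)))" for h
  have phiB: "\<phi> h \<in> Bij K" if "h \<in> H" for h
  proof -
    have "bij_betw (f \<circ> h \<circ> g) K K"
      using g hbC[OF that] f by (auto intro: bij_betw_trans)
    hence "bij_betw (\<phi> h) K K"
      unfolding \<phi>_def by (rule bij_betw_cong[THEN iffD1, rotated]) auto
    thus ?thesis by (simp add: Bij_def \<phi>_def)
  qed
  have "\<phi> \<in> iso ((Aut ar I)\<lparr>carrier := H\<rparr>) (BijGroup K)"
  proof (rule isoI)
    show "\<phi> \<in> hom ((Aut ar I)\<lparr>carrier := H\<rparr>) (BijGroup K)"
    proof (rule homI)
      fix h assume "h \<in> carrier ((Aut ar I)\<lparr>carrier := H\<rparr>)"
      thus "\<phi> h \<in> carrier (BijGroup K)" using phiB by (simp add: BijGroup_def)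
    next
      fix h k assume "h \<in> carrier ((Aut ar I)\<lparr>carrier := H\<rparr>)" "k \<in> carrier ((Aut ar I)\<lparr>carrier := H\<rparr>)"
      hence h: "h \<in> H" and k: "k \<in> H" by auto
      have m: "h \<otimes>\<^bsub>(Aut ar I)\<lparr>carrier := H\<rparr>\<^esub> k = h \<circ> k"
        using h k by (simp add: restrict_UNIV comp_def Aut_def BijGroup_def compose_def H_def Bij_UNIV)
      have "\<phi> (h \<circ> k) = compose K (\<phi> h) (\<phi> k)"
        unfolding \<phi>_def compose_def
        by (rule ext) (auto simp: gf fC gK hin[OF k])
      thus "\<phi> (h \<otimes>\<^bsub>(Aut ar I)\<lparr>carrier := H\<rparr>\<^esub> k) = \<phi> h \<otimes>\<^bsub>BijGroup K\<^esub> \<phi> k"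
        using m phiB[OF h] phiB[OF k] by (simp add: BijGroup_def)
    qed
  next
    show "bij_betw \<phi> (carrier ((Aut ar I)\<lparr>carrier := H\<rparr>)) (carrier (BijGroup K))"
      unfolding bij_betw_def
    proof
      show "inj_on \<phi> (carrier ((Aut ar I)\<lparr>carrier := H\<rparr>))"
      proof (rule inj_onI)
        fix h k assume "h \<in> carrier ((Aut ar I)\<lparr>carrier := H\<rparr>)" "k \<in> carrier ((Aut ar I)\<lparr>carrier := H\<rparr>)"
          and e: "\<phi> h = \<phi> k"
        hence h: "h \<in> H" and k: "k \<in> H" by auto
        show "h = k"
        proof
          fix x show "h x = k x"
          proof (cases "x \<in> C")
            case True
            have "\<phi> h (f x) = \<phi> k (f x)" using e by simp
            hence "f (h x) = f (k x)" using True by (simp add: \<phi>_def fC gf)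
            thus ?thesis using f True hin[OF h True] hin[OF k True]
              by (meson bij_betw_def inj_onD)
          next
            case False then show ?thesis using h k by (simp add: H_def)
          qed
        qed
      qed
    next
      show "\<phi> ` carrier ((Aut ar I)\<lparr>carrier := H\<rparr>) = carrier (BijGroup K)"
      proof
        show "\<phi> ` carrier ((Aut ar I)\<lparr>carrier := H\<rparr>) \<subseteq> carrier (BijGroup K)"
          using phiB by (auto simp: BijGroup_def)
      next
        show "carrier (BijGroup K) \<subseteq> \<phi> ` carrier ((Aut ar I)\<lparr>carrier := H\<rparr>)"
        proof
          fix s assume "s \<in> carrier (BijGroup K)"
          hence s: "bij_betw s K K" and se: "s \<in> extensional K" by (auto simp: BijGroup_def Bij_def)
          define h where "h x = (if x \<in> C then g (s (f x)) else x)" for x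
          have sK: "\<And>x. x \<in> K \<Longrightarrow> s x \<in> K" using s bij_betwE by blast
          have hCC: "bij_betw h C C"
          proof -
            have "bij_betw (g \<circ> s \<circ> f) C C" using f s g by (auto intro: bij_betw_trans)
            thus ?thesis by (rule bij_betw_cong[THEN iffD1, rotated]) (auto simp: h_def)
          qed
          have "bij h"
          proof -
            have "bij_betw h (-C) (-C)"
              by (rule bij_betw_cong[THEN iffD1, of _ id, rotated]) (auto simp: h_def)
            from bij_betw_combine[OF hCC this] show ?thesis by simp
          qed
          hence hH: "h \<in> H" by (simp add: H_def h_def)
          have "\<phi> h = s"
          proof
            fix x show "\<phi> h x = s x"
              using se by (cases "x \<in> K") (auto simp: \<phi>_def h_def gK fg sK extensional_def)
          qed
          thus "s \<in> \<phi> ` carrier ((Aut ar I)\<lparr>carrier := H\<rparr>)" using hH by auto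
        qed
      qed
    qed
  qed
  hence "(Aut ar I)\<lparr>carrier := H\<rparr> \<cong> BijGroup K" unfolding is_iso_def by blast
  with sub show ?thesis by blast
qed

end
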